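(* For all integers $p\ge2$, $k\ge1$ and $0\le h<k$ with $\gcd(h,k)=1$, $$\big|v^{(p)}_{h,k}\big|\le\frac{4\,k^{2p+1}\,(p+1)!}{p\,(2\pi)^{2p+2}}\,\zeta(p)\,\zeta(p+2).$$
   Context: $B_n(x)$ is the $n$-th Bernoulli polynomial and $B_n=B_n(0)$. For $p\ge1$, $v^{(p)}_{h,k}=\frac{(-1)^pk^{1+p}}{p!\,p\,(p+2)}\Big[B_{p+2}B_p+\frac{p}{(2i)^p}\sum_{d=1}^{k-1}B_{p+2}(d/k)\cot^{(p-1)}(\pi dh/k)\Big]$, where $\cot^{(p-1)}$ denotes the $(p-1)$-th derivative of the cotangent function (empty sum $=0$ for $k=1$). *)

theory Defs
  imports "HOL-Analysis.Analysis"
begin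

text \<open>Bernoulli numbers with the convention B_1 = -1/2, via the standard recurrence
  sum_{j=0}^{n} (n+1 choose j) B_j = 0 for n >= 1.\<close>
fun bernoulli_num :: "nat \<Rightarrow> real" where
  "bernoulli_num n =
     (if n = 0 then 1
      else - (\<Sum>j<n. real (Suc n choose j) * bernoulli_num j) / real (Suc n))"

definition bernoulli_poly :: "nat \<Rightarrow> real \<Rightarrow> real" where
  "bernoulli_poly n x = (\<Sum>j\<le>n. real (n choose j) * bernoulli_num j * x ^ (n - j))"

definition zeta_nat :: "nat \<Rightarrow> real" where
  "zeta_nat s = (\<Sum>n. 1 / real (Suc n) ^ s)"

definition cot_deriv :: "nat \<Rightarrow> real \<Rightarrow> real" where
  "cot_deriv m = (deriv ^^ m) cot"

definition v_coeff :: "nat \<Rightarrow> nat \<Rightarrow> nat \<Rightarrow> complex" where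
  "v_coeff p h k =
     complex_of_real ((-1) ^ p * real k ^ (1 + p) / (fact p * real p * real (p + 2))) *
     (complex_of_real (bernoulli_num (p + 2) * bernoulli_num p)
      + of_nat p / (2 * \<i>) ^ p *
        complex_of_real (\<Sum>d = 1..k - 1. bernoulli_poly (p + 2) (real d / real k) *
                            cot_deriv (p - 1) (pi * real d * real h / real k)))"

end

theory Submission
  imports Defs
begin


lemma taylor2:
  fixes f f1 f2 :: "real \<Rightarrow> real"
  assumes ac: "a \<le> c" "c \<le> b" and ax: "a \<le> x" "x \<le> b"
   and d1: "\<And>t. a \<le> t \<Longrightarrow> t \<le> b \<Longrightarrow> (f has_real_derivative f1 t) (at t)"
   and d2: "\<And>t. a \<le> t \<Longrightarrow> t \<le> b \<Longrightarrow> (f1 has_real_derivative f2 t) (at t)"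
   and bd: "\<And>t. a \<le> t \<Longrightarrow> t \<le> b \<Longrightarrow> \<bar>f2 t\<bar> \<le> K"
  shows "\<bar>f x - f c - f1 c * (x - c)\<bar> \<le> K * (x - c)^2"
proof -
  have K: "K \<ge> 0" using bd[of c] ac by linarith
  consider "x = c" | "c < x" | "x < c" by linarith
  thus ?thesis
  proof cases
    case 1 thus ?thesis using K by simp
  next
    case 2
    from MVT2[OF 2, of f f1] d1 ac ax obtain z where z: "c < z" "z < x" "f x - f c = (x - c) * f1 z"
      by auto
    from MVT2[OF z(1), of f1 f2] d2 ac ax z obtain w where w: "c < w" "w < z" "f1 z - f1 c = (z - c) * f2 w"
      by auto
    have "f x - f c - f1 c * (x - c) = (x - c) * (f1 z - f1 c)"
      using z(3) by (simp add: algebra_simps)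
    hence "f x - f c - f1 c * (x - c) = (x - c) * (z - c) * f2 w"
      using w(3) by simp
    hence "\<bar>f x - f c - f1 c * (x - c)\<bar> = (x - c) * (z - c) * \<bar>f2 w\<bar>"
      using z by (simp add: abs_mult)
    also have "\<dots> \<le> (x - c) * (x - c) * K"
      using z w bd[of w] ac ax by (intro mult_mono) auto
    finally show ?thesis by (simp add: power2_eq_square algebra_simps)
  next
    case 3
    from MVT2[OF 3, of f f1] d1 ac ax obtain z where z: "x < z" "z < c" "f c - f x = (c - x) * f1 z"
      by auto
    from MVT2[OF z(2), of f1 f2] d2 ac ax z obtain w where w: "z < w" "w < c" "f1 c - f1 z = (c - z) * f2 w"
      by auto
    have "f x - f c - f1 c * (x - c) = (c - x) * (f1 c - f1 z)"
      using z(3) by (simp add: algebra_simps)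
    hence "f x - f c - f1 c * (x - c) = (c - x) * (c - z) * f2 w"
      using w(3) by simp
    hence "\<bar>f x - f c - f1 c * (x - c)\<bar> = (c - x) * (c - z) * \<bar>f2 w\<bar>"
      using z by (simp add: abs_mult)
    also have "\<dots> \<le> (c - x) * (c - x) * K"
      using z w bd[of w] ac ax by (intro mult_mono) auto
    finally show ?thesis by (simp add: power2_eq_square algebra_simps)
  qed
qed

lemma trig_sum:
  "2 * sin (pi * t) * (\<Sum>m<M. cos (2 * pi * real (Suc m) * t)) = sin (real (2 * M + 1) * pi * t) - sin (pi * t)"
proof (induction M)
  case 0 thus ?case by simp
next
  case (Suc M)
  have e1: "real (2 * Suc M + 1) * pi * t = 2 * pi * real (Suc M) * t + pi * t"
    by (simp add: algebra_simps)
  have e2: "real (2 * M + 1) * pi * t = 2 * pi * real (Suc M) * t - pi * t"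
    by (simp add: algebra_simps)
  have "2 * sin (pi * t) * (\<Sum>m<Suc M. cos (2 * pi * real (Suc m) * t))
      = 2 * sin (pi * t) * (\<Sum>m<M. cos (2 * pi * real (Suc m) * t)) + 2 * sin (pi * t) * cos (2 * pi * real (Suc M) * t)"
    by (simp add: algebra_simps)
  also have "\<dots> = sin (real (2 * M + 1) * pi * t) - sin (pi * t) + 2 * sin (pi * t) * cos (2 * pi * real (Suc M) * t)"
    using Suc by simp
  also have "\<dots> = sin (real (2 * Suc M + 1) * pi * t) - sin (pi * t)"
    unfolding e1 e2 sin_add sin_diff by (simp add: algebra_simps)
  finally show ?case .
qed

definition PP :: "nat \<Rightarrow> real \<Rightarrow> real" where
  "PP M t = (\<Sum>m<M. cos (2 * pi * real (Suc m) * t) / real (Suc m) ^ 2)"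
definition PP1 :: "nat \<Rightarrow> real \<Rightarrow> real" where
  "PP1 M t = (\<Sum>m<M. - (2 * pi * sin (2 * pi * real (Suc m) * t) / real (Suc m)))"
definition PP2 :: "nat \<Rightarrow> real \<Rightarrow> real" where
  "PP2 M t = (\<Sum>m<M. - (4 * pi ^ 2 * cos (2 * pi * real (Suc m) * t)))"

lemma term_d1: "r \<noteq> 0 \<Longrightarrow> ((\<lambda>t. cos (2 * pi * r * t) / r ^ 2) has_real_derivative - (2 * pi * sin (2 * pi * r * t) / r)) (at t)"
  by (auto intro!: derivative_eq_intros simp: power2_eq_square field_simps)

lemma term_d2: "r \<noteq> 0 \<Longrightarrow> ((\<lambda>t. - (2 * pi * sin (2 * pi * r * t) / r)) has_real_derivative - (4 * pi ^ 2 * cos (2 * pi * r * t))) (at t)"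
  by (auto intro!: derivative_eq_intros simp: power2_eq_square field_simps)

lemma PP_deriv: "(PP M has_real_derivative PP1 M t) (at t)"
  unfolding PP_def[abs_def] PP1_def
  by (rule DERIV_sum) (rule term_d1, simp)

lemma PP1_deriv: "(PP1 M has_real_derivative PP2 M t) (at t)"
  unfolding PP1_def[abs_def] PP2_def
  by (rule DERIV_sum) (rule term_d2, simp)

lemma PP2_closed:
  assumes "sin (pi * t) \<noteq> 0"
  shows "PP2 M t = - 2 * pi ^ 2 * (sin (real (2 * M + 1) * pi * t) / sin (pi * t) - 1)"
proof -
  have "PP2 M t = - 4 * pi ^ 2 * (\<Sum>m<M. cos (2 * pi * real (Suc m) * t))"
    unfolding PP2_def by (simp add: sum_distrib_left)
  also have "(\<Sum>m<M. cos (2 * pi * real (Suc m) * t)) = (sin (real (2 * M + 1) * pi * t) - sin (pi * t)) / (2 * sin (pi * t))"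
    using trig_sum[of t M] assms by (simp add: field_simps)
  finally show ?thesis using assms by (simp add: field_simps)
qed

definition gg :: "real \<Rightarrow> real" where "gg t = 1 / sin (pi * t)"
definition gg1 :: "real \<Rightarrow> real" where "gg1 t = - pi * cos (pi * t) / sin (pi * t) ^ 2"
definition gg2 :: "real \<Rightarrow> real" where "gg2 t = pi ^ 2 * (sin (pi * t) ^ 2 + 2 * cos (pi * t) ^ 2) / sin (pi * t) ^ 3"

lemma gg_deriv: "sin (pi * t) \<noteq> 0 \<Longrightarrow> (gg has_real_derivative gg1 t) (at t)"
  unfolding gg_def[abs_def] gg1_def
  by (auto intro!: derivative_eq_intros simp: power2_eq_square field_simps)

lemma gg1_deriv: "sin (pi * t) \<noteq> 0 \<Longrightarrow> (gg1 has_real_derivative gg2 t) (at t)"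
  unfolding gg1_def[abs_def] gg2_def
  by (auto intro!: derivative_eq_intros simp: power2_eq_square power3_eq_cube field_simps)

lemma sin_lower:
  assumes "0 < x" "x < 1" "min x (1/2) \<le> t" "t \<le> max x (1/2)"
  shows "sin (pi * x) \<le> sin (pi * t)"
proof (cases "x \<le> 1/2")
  case True
  hence t: "x \<le> t" "t \<le> 1/2" using assms by auto
  have "0 \<le> pi * x" using assms by simp
  moreover have "pi * x \<le> pi * t" "pi * t \<le> pi / 2" using t by auto
  moreover have "- (pi / 2) \<le> 0" by simp
  ultimately show ?thesis by (intro sin_monotone_2pi_le) linarith+
next
  case False
  hence t: "1/2 \<le> t" "t \<le> x" using assms by auto
  have "0 \<le> pi - pi * x" using assms by (simp add: algebra_simps)
  moreover have "pi - pi * x \<le> pi - pi * t" "pi - pi * t \<le> pi / 2" using t by (auto simp: algebra_simps)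
  moreover have "- (pi / 2) \<le> 0" by simp
  ultimately have "sin (pi - pi * x) \<le> sin (pi - pi * t)"
    by (intro sin_monotone_2pi_le) linarith+
  thus ?thesis by simp
qed

lemma deriv_eqI: "(f has_real_derivative D) (at t) \<Longrightarrow> D = E \<Longrightarrow> (f has_real_derivative E) (at t)"
  by simp

lemma gg1_bound:
  assumes "0 < s0" "s0 \<le> sin (pi * t)"
  shows "\<bar>gg1 t\<bar> \<le> pi / s0 ^ 2"
proof -
  have "\<bar>gg1 t\<bar> = pi * \<bar>cos (pi * t)\<bar> / sin (pi * t) ^ 2"
    unfolding gg1_def by (simp add: abs_mult)
  also have "\<dots> \<le> pi * 1 / sin (pi * t) ^ 2"
    by (intro divide_right_mono mult_left_mono) auto
  also have "\<dots> \<le> pi / s0 ^ 2"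
  proof -
    have "s0 ^ 2 \<le> sin (pi * t) ^ 2" using assms by (intro power_mono) auto
    moreover have "0 < sin (pi * t) ^ 2 * s0 ^ 2" using assms by auto
    ultimately show ?thesis by (simp add: divide_left_mono)
  qed
  finally show ?thesis by simp
qed

lemma gg2_bound:
  assumes "0 < s0" "s0 \<le> sin (pi * t)"
  shows "\<bar>gg2 t\<bar> \<le> 3 * pi ^ 2 / s0 ^ 3"
proof -
  have sp: "sin (pi * t) > 0" using assms by linarith
  have h: "sin (pi * t) ^ 2 + 2 * cos (pi * t) ^ 2 \<le> 3"
    using sin_cos_squared_add[of "pi * t"] zero_le_power2[of "sin (pi * t)"] zero_le_power2[of "cos (pi * t)"]
    by linarith
  have "\<bar>gg2 t\<bar> = pi ^ 2 * (sin (pi * t) ^ 2 + 2 * cos (pi * t) ^ 2) / sin (pi * t) ^ 3"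
    unfolding gg2_def using sp by (simp add: abs_mult)
  also have "\<dots> \<le> pi ^ 2 * 3 / sin (pi * t) ^ 3"
    using h by (intro divide_right_mono mult_left_mono) (use sp in auto)
  also have "\<dots> \<le> 3 * pi ^ 2 / s0 ^ 3"
  proof -
    have "s0 ^ 3 \<le> sin (pi * t) ^ 3" using assms by (intro power_mono) auto
    moreover have "0 < sin (pi * t) ^ 3 * s0 ^ 3" using assms sp by auto
    ultimately have "3 * pi ^ 2 / sin (pi * t) ^ 3 \<le> 3 * pi ^ 2 / s0 ^ 3" by (intro divide_left_mono) auto
    thus ?thesis by (simp add: mult.commute)
  qed
  finally show ?thesis by simp
qed

lemma PP_bound:
  assumes x: "0 < x" "x < 1"
  defines "s0 \<equiv> sin (pi * x)"
  shows "\<bar>PP M x - pi ^ 2 * (x ^ 2 - x + 1/6)\<bar>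
     \<le> (4 * pi ^ 2 + 4 * pi ^ 3 / s0 ^ 2 + 6 * pi ^ 4 / s0 ^ 3 + 2 * pi ^ 2 / s0) / (real (2 * M + 1) * pi)
        + \<bar>PP M (1/2) + pi ^ 2 / 12\<bar>"
proof -
  define L where "L = real (2 * M + 1) * pi"
  define \<kappa> where "\<kappa> = 2 * pi ^ 2 / L ^ 2"
  have L1: "L \<ge> 1"
  proof -
    have "1 * 1 \<le> real (2 * M + 1) * pi" by (rule mult_mono) (use pi_ge_two in auto)
    thus ?thesis unfolding L_def by simp
  qed
  have Lpos: "L > 0" using L1 by simp
  have kL2: "\<kappa> * L ^ 2 = 2 * pi ^ 2" unfolding \<kappa>_def using Lpos by simp
  have s0: "s0 > 0" unfolding s0_def using x by (intro sin_gt_zero) auto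
  define a where "a = min x (1/2)"
  define b where "b = max x (1/2)"
  have sab: "s0 \<le> sin (pi * t)" if "a \<le> t" "t \<le> b" for t
    unfolding s0_def using sin_lower[OF x, of t] that a_def b_def by simp
  have snz: "sin (pi * t) \<noteq> 0" if "a \<le> t" "t \<le> b" for t
    using sab[OF that] s0 by linarith
  define Q where "Q t = pi ^ 2 * (t ^ 2 - t + 1/6)" for t :: real
  define Q1 where "Q1 t = pi ^ 2 * (2 * t - 1)" for t :: real
  define V where "V t = \<kappa> * (sin (L * t) * gg t)" for t
  define V1 where "V1 t = \<kappa> * (L * cos (L * t) * gg t + sin (L * t) * gg1 t)" for t
  define V2 where "V2 t = \<kappa> * (- (L ^ 2) * sin (L * t) * gg t + 2 * L * cos (L * t) * gg1 t + sin (L * t) * gg2 t)" for t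
  define W where "W t = PP M t - Q t - V t" for t
  define W1 where "W1 t = PP1 M t - Q1 t - V1 t" for t
  define W2 where "W2 t = PP2 M t - 2 * pi ^ 2 - V2 t" for t
  have dQ: "(Q has_real_derivative Q1 t) (at t)" for t
    unfolding Q_def[abs_def] Q1_def by (rule deriv_eqI) (auto intro!: derivative_eq_intros simp: algebra_simps)
  have dQ1: "(Q1 has_real_derivative 2 * pi ^ 2) (at t)" for t
    unfolding Q1_def[abs_def] by (rule deriv_eqI) (auto intro!: derivative_eq_intros simp: algebra_simps)
  have dV: "(V has_real_derivative V1 t) (at t)" if "a \<le> t" "t \<le> b" for t
    unfolding V_def[abs_def] V1_def
    by (rule deriv_eqI, rule DERIV_cmult, rule DERIV_mult, rule deriv_eqI) 
       (auto intro!: derivative_eq_intros gg_deriv snz[OF that] simp: algebra_simps)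
  have dV1: "(V1 has_real_derivative V2 t) (at t)" if "a \<le> t" "t \<le> b" for t
  proof -
    have a1: "((\<lambda>t. L * cos (L * t)) has_real_derivative (L * (- sin (L * t) * L))) (at t)"
      by (rule deriv_eqI) (auto intro!: derivative_eq_intros)
    have a2: "((\<lambda>t. sin (L * t)) has_real_derivative (cos (L * t) * L)) (at t)"
      by (rule deriv_eqI) (auto intro!: derivative_eq_intros)
    have "((\<lambda>t. L * cos (L * t) * gg t + sin (L * t) * gg1 t) has_real_derivative
       (L * (- sin (L * t) * L)) * gg t + gg1 t * (L * cos (L * t)) + ((cos (L * t) * L) * gg1 t + gg2 t * sin (L * t))) (at t)"
      by (rule DERIV_add[OF DERIV_mult[OF a1 gg_deriv[OF snz[OF that]]] DERIV_mult[OF a2 gg1_deriv[OF snz[OF that]]]])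
    from DERIV_cmult[OF this, of \<kappa>] show ?thesis
      unfolding V1_def[abs_def] V2_def by (rule deriv_eqI) (simp add: algebra_simps power2_eq_square)
  qed
  have dW: "(W has_real_derivative W1 t) (at t)" if "a \<le> t" "t \<le> b" for t
    unfolding W_def[abs_def] W1_def
    by (intro DERIV_diff PP_deriv dQ dV that)
  have dW1: "(W1 has_real_derivative W2 t) (at t)" if "a \<le> t" "t \<le> b" for t
    unfolding W1_def[abs_def] W2_def
    by (intro DERIV_diff PP1_deriv dQ1 dV1 that)
  define K where "K = \<kappa> * (2 * L * (pi / s0 ^ 2) + 3 * pi ^ 2 / s0 ^ 3)"
  have W2b: "\<bar>W2 t\<bar> \<le> K" if "a \<le> t" "t \<le> b" for t
  proof -
    have sn: "sin (pi * t) \<noteq> 0" using snz[OF that] .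
    have gge: "sin (L * t) * gg t = sin (real (2 * M + 1) * pi * t) / sin (pi * t)"
      unfolding gg_def L_def by (simp add: mult.assoc)
    have "W2 t = - 2 * pi ^ 2 * (sin (L * t) * gg t - 1) - 2 * pi ^ 2
         - \<kappa> * (- (L ^ 2) * sin (L * t) * gg t + 2 * L * cos (L * t) * gg1 t + sin (L * t) * gg2 t)"
      unfolding W2_def V2_def PP2_closed[OF sn] gge by simp
    also have "\<dots> = - (\<kappa> * (2 * L * cos (L * t) * gg1 t + sin (L * t) * gg2 t))"
      using kL2 by (simp add: algebra_simps)
    finally have "\<bar>W2 t\<bar> = \<kappa> * \<bar>2 * L * cos (L * t) * gg1 t + sin (L * t) * gg2 t\<bar>"
      unfolding \<kappa>_def by (simp add: abs_mult)
    also have "\<bar>2 * L * cos (L * t) * gg1 t + sin (L * t) * gg2 t\<bar> \<le> 2 * L * (pi / s0 ^ 2) + 3 * pi ^ 2 / s0 ^ 3"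
    proof -
      have "\<bar>2 * L * cos (L * t) * gg1 t\<bar> = 2 * L * \<bar>cos (L * t)\<bar> * \<bar>gg1 t\<bar>"
        using Lpos by (simp add: abs_mult)
      also have "\<dots> \<le> 2 * L * 1 * (pi / s0 ^ 2)"
        using gg1_bound[OF s0 sab[OF that]] Lpos by (intro mult_mono) auto
      finally have 1: "\<bar>2 * L * cos (L * t) * gg1 t\<bar> \<le> 2 * L * (pi / s0 ^ 2)" by simp
      have "\<bar>sin (L * t) * gg2 t\<bar> = \<bar>sin (L * t)\<bar> * \<bar>gg2 t\<bar>" by (simp add: abs_mult)
      also have "\<dots> \<le> 1 * (3 * pi ^ 2 / s0 ^ 3)"
        using gg2_bound[OF s0 sab[OF that]] by (intro mult_mono) auto
      finally have 2: "\<bar>sin (L * t) * gg2 t\<bar> \<le> 3 * pi ^ 2 / s0 ^ 3" by simp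
      show ?thesis using 1 2 by linarith
    qed
    hence "\<kappa> * \<bar>2 * L * cos (L * t) * gg1 t + sin (L * t) * gg2 t\<bar> \<le> \<kappa> * (2 * L * (pi / s0 ^ 2) + 3 * pi ^ 2 / s0 ^ 3)"
      unfolding \<kappa>_def by (intro mult_left_mono) auto
    finally show ?thesis unfolding K_def .
  qed
  have ab: "a \<le> 1/2" "1/2 \<le> b" "a \<le> x" "x \<le> b" unfolding a_def b_def by auto
  have tay: "\<bar>W x - W (1/2) - W1 (1/2) * (x - 1/2)\<bar> \<le> K * (x - 1/2) ^ 2"
    by (rule taylor2[OF ab dW dW1 W2b])
  have g12: "gg (1/2) = 1" "gg1 (1/2) = 0" unfolding gg_def gg1_def by simp_all
  have PP1h: "PP1 M (1/2) = 0"
  proof -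
    have "sin (2 * pi * real (Suc m) * (1/2)) = 0" for m
      using sin_npi[of "Suc m"] by (simp add: mult.commute)
    thus ?thesis unfolding PP1_def by simp
  qed
  have Wh: "W (1/2) = PP M (1/2) + pi ^ 2 / 12 - \<kappa> * sin (L / 2)"
    unfolding W_def Q_def V_def using g12 by (simp add: field_simps power2_eq_square)
  have W1h: "W1 (1/2) = - (\<kappa> * L * cos (L / 2))"
    unfolding W1_def Q1_def V1_def using g12 PP1h by simp
  have Vx: "\<bar>V x\<bar> \<le> \<kappa> / s0"
  proof -
    have "\<bar>V x\<bar> = \<kappa> * \<bar>sin (L * x)\<bar> / s0"
      unfolding V_def gg_def s0_def \<kappa>_def using s0 unfolding s0_def by (simp add: abs_mult)
    also have "\<dots> \<le> \<kappa> * 1 / s0"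
      unfolding \<kappa>_def using s0 by (intro divide_right_mono mult_left_mono) auto
    finally show ?thesis by simp
  qed
  have kpos: "\<kappa> > 0" unfolding \<kappa>_def using Lpos by simp
  have x12b: "\<bar>x - 1/2\<bar> \<le> 1" using x by linarith
  have x12: "(x - 1/2) ^ 2 \<le> 1" "\<bar>x - 1/2\<bar> \<le> 1"
    using x12b by (metis abs_ge_zero power2_abs power_le_one) (rule x12b)
  have Kpos: "K \<ge> 0" unfolding K_def using kpos Lpos s0 by auto
  have "PP M x - Q x = W x + V x" unfolding W_def by simp
  hence "\<bar>PP M x - Q x\<bar> \<le> \<bar>W x\<bar> + \<bar>V x\<bar>" by simp
  also have "\<bar>W x\<bar> \<le> \<bar>W (1/2)\<bar> + \<bar>W1 (1/2)\<bar> * \<bar>x - 1/2\<bar> + K * (x - 1/2) ^ 2"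
  proof -
    have "\<bar>W1 (1/2) * (x - 1/2)\<bar> = \<bar>W1 (1/2)\<bar> * \<bar>x - 1/2\<bar>" by (rule abs_mult)
    thus ?thesis using tay by linarith
  qed
  also have "\<bar>W (1/2)\<bar> \<le> \<bar>PP M (1/2) + pi ^ 2 / 12\<bar> + \<kappa>"
  proof -
    have "\<bar>\<kappa> * sin (L / 2)\<bar> \<le> \<kappa>" using kpos by (simp add: abs_mult)
    thus ?thesis unfolding Wh by linarith
  qed
  also have "\<bar>W1 (1/2)\<bar> * \<bar>x - 1/2\<bar> \<le> \<kappa> * L"
  proof -
    have "\<bar>W1 (1/2)\<bar> \<le> \<kappa> * L" unfolding W1h using kpos Lpos by (simp add: abs_mult)
    thus ?thesis using x12(2) by (smt (verit) abs_ge_zero mult_left_le mult_right_mono)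
  qed
  also have "K * (x - 1/2) ^ 2 \<le> K" using Kpos x12(1) by (simp add: mult_left_le)
  finally have main: "\<bar>PP M x - Q x\<bar> \<le> \<bar>PP M (1/2) + pi ^ 2 / 12\<bar> + (\<kappa> + \<kappa> * L + K + \<kappa> / s0)"
    using Vx by linarith
  have "\<kappa> + \<kappa> * L + K + \<kappa> / s0 = (2 * pi ^ 2 / L ^ 2) + 2 * pi ^ 2 / L + 4 * pi ^ 3 / (s0 ^ 2 * L) + 6 * pi ^ 4 / (s0 ^ 3 * L ^ 2) + 2 * pi ^ 2 / (s0 * L ^ 2)"
    unfolding K_def \<kappa>_def using Lpos s0 by (simp add: field_simps power2_eq_square power3_eq_cube eval_nat_numeral)
  also have "\<dots> \<le> (2 * pi ^ 2 / L) + 2 * pi ^ 2 / L + 4 * pi ^ 3 / (s0 ^ 2 * L) + 6 * pi ^ 4 / (s0 ^ 3 * L) + 2 * pi ^ 2 / (s0 * L)"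
  proof -
    have LL: "L \<le> L ^ 2" using L1 by (simp add: power2_eq_square)
    have 1: "c / L ^ 2 \<le> c / L" if "c \<ge> 0" for c
      using that Lpos LL by (intro divide_left_mono) auto
    have 2: "c / (d * L ^ 2) \<le> c / (d * L)" if "c \<ge> 0" "d > 0" for c d
      using that Lpos LL by (intro divide_left_mono mult_left_mono) auto
    show ?thesis using 1[of "2 * pi ^ 2"] 2[of "6 * pi ^ 4" "s0 ^ 3"] 2[of "2 * pi ^ 2" s0] s0 by simp
  qed
  also have "\<dots> = (4 * pi ^ 2 + 4 * pi ^ 3 / s0 ^ 2 + 6 * pi ^ 4 / s0 ^ 3 + 2 * pi ^ 2 / s0) / L"
    using s0 Lpos by (simp add: field_simps)
  finally show ?thesis using main unfolding Q_def L_def by linarith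
qed

lemma basel: "(\<lambda>n. 1 / real (Suc n) ^ 2) sums (pi ^ 2 / 6)"
  using inverse_squares_sums by (simp add: of_nat_power)

lemma alt_basel: "(\<lambda>n. (-1) ^ Suc n / real (Suc n) ^ 2) sums (- (pi ^ 2 / 12))"
proof -
  define a where "a n = 1 / real (Suc n) ^ 2" for n
  define e where "e n = (if odd n then a n else 0)" for n
  have "(\<lambda>j. a j / 4) sums (pi ^ 2 / 6 / 4)"
    unfolding a_def by (intro sums_divide basel)
  moreover have eq: "e (2 * j + 1) = a j / 4" for j
    unfolding e_def a_def by (simp add: field_simps power2_eq_square)
  moreover have "(\<lambda>j. e (2 * j + 1)) = (\<lambda>j. a j / 4)" by (rule ext) (rule eq)
  ultimately have "(\<lambda>j. e (2 * j + 1)) sums (pi ^ 2 / 24)" by simp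
  moreover have "strict_mono (\<lambda>j::nat. 2 * j + 1)" by (auto simp: strict_mono_def)
  moreover have "e n = 0" if "n \<notin> range (\<lambda>j::nat. 2 * j + 1)" for n
  proof -
    have "\<not> odd n"
    proof
      assume "odd n"
      then obtain j where "n = 2 * j + 1" by (auto elim!: oddE)
      with that show False by auto
    qed
    thus ?thesis unfolding e_def by simp
  qed
  ultimately have es: "e sums (pi ^ 2 / 24)"
    using sums_mono_reindex[of "\<lambda>j::nat. 2 * j + 1" e "pi ^ 2 / 24"] by simp
  have "(\<lambda>n. 2 * e n - a n) sums (2 * (pi ^ 2 / 24) - pi ^ 2 / 6)"
    unfolding a_def by (intro sums_diff sums_mult es basel)
  moreover have "2 * e n - a n = (-1) ^ Suc n / real (Suc n) ^ 2" for n
    unfolding e_def a_def by (cases "odd n") auto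
  ultimately show ?thesis by simp
qed

lemma PP_half: "(\<lambda>M. PP M (1/2)) \<longlonglongrightarrow> - (pi ^ 2 / 12)"
proof -
  have "cos (2 * pi * real (Suc m) * (1/2)) = (-1) ^ Suc m" for m
    using cos_npi[of "Suc m"] by (simp add: mult.commute)
  hence "PP M (1/2) = (\<Sum>m<M. (-1) ^ Suc m / real (Suc m) ^ 2)" for M
    unfolding PP_def by simp
  thus ?thesis using alt_basel unfolding sums_def by simp
qed

lemma cos_series_2:
  assumes "0 \<le> x" "x \<le> 1"
  shows "(\<lambda>m. cos (2 * pi * real (Suc m) * x) / real (Suc m) ^ 2) sums (pi ^ 2 * (x ^ 2 - x + 1/6))"
proof -
  consider "x = 0" | "x = 1" | "0 < x \<and> x < 1" using assms by linarith
  thus ?thesis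
  proof cases
    case 1 thus ?thesis using basel by simp
  next
    case 2
    have "cos (2 * pi * real (Suc m)) = 1" for m
      using cos_npi[of "2 * Suc m"] by (simp add: mult.commute mult.left_commute)
    thus ?thesis using 2 basel by simp
  next
    case 3
    hence x: "0 < x" "x < 1" by auto
    define C where "C = (4 * pi ^ 2 + 4 * pi ^ 3 / sin (pi * x) ^ 2 + 6 * pi ^ 4 / sin (pi * x) ^ 3 + 2 * pi ^ 2 / sin (pi * x))"
    have s0: "sin (pi * x) > 0" using x by (intro sin_gt_zero) auto
    have C0: "C \<ge> 0" unfolding C_def using s0 by auto
    have bnd: "norm (PP M x - pi ^ 2 * (x ^ 2 - x + 1/6)) \<le> C * inverse (real (Suc M)) + \<bar>PP M (1/2) + pi ^ 2 / 12\<bar>" for M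
    proof -
      have "C / (real (2 * M + 1) * pi) \<le> C / real (Suc M)"
      proof (rule divide_left_mono[OF _ C0])
        have "real (Suc M) * 1 \<le> real (2 * M + 1) * pi" by (rule mult_mono) (use pi_ge_two in auto)
        thus "real (Suc M) \<le> real (2 * M + 1) * pi" by simp
        show "0 < real (2 * M + 1) * pi * real (Suc M)" by simp
      qed
      moreover have "C * inverse (real (Suc M)) = C / real (Suc M)" by (simp add: divide_inverse)
      ultimately show ?thesis using PP_bound[OF x, of M, folded C_def] unfolding real_norm_def by linarith
    qed
    have t1: "(\<lambda>M. C * inverse (real (Suc M))) \<longlonglongrightarrow> C * 0"
      by (rule tendsto_mult[OF tendsto_const LIMSEQ_inverse_real_of_nat])
    have "(\<lambda>M. PP M (1/2) + pi ^ 2 / 12) \<longlonglongrightarrow> - (pi ^ 2 / 12) + pi ^ 2 / 12"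
      by (rule tendsto_add[OF PP_half tendsto_const])
    hence "(\<lambda>M. PP M (1/2) + pi ^ 2 / 12) \<longlonglongrightarrow> 0" by simp
    hence t2: "(\<lambda>M. \<bar>PP M (1/2) + pi ^ 2 / 12\<bar>) \<longlonglongrightarrow> 0" by (rule tendsto_rabs_zero)
    have "(\<lambda>M. C * inverse (real (Suc M)) + \<bar>PP M (1/2) + pi ^ 2 / 12\<bar>) \<longlonglongrightarrow> C * 0 + 0"
      by (rule tendsto_add[OF t1 t2])
    hence lim0: "(\<lambda>M. C * inverse (real (Suc M)) + \<bar>PP M (1/2) + pi ^ 2 / 12\<bar>) \<longlonglongrightarrow> 0" by simp
    have ev: "eventually (\<lambda>M. norm (PP M x - pi ^ 2 * (x ^ 2 - x + 1/6)) \<le> C * inverse (real (Suc M)) + \<bar>PP M (1/2) + pi ^ 2 / 12\<bar>) sequentially"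
      by (rule always_eventually) (rule allI, rule bnd)
    have "(\<lambda>M. PP M x - pi ^ 2 * (x ^ 2 - x + 1/6)) \<longlonglongrightarrow> 0"
      by (rule Lim_null_comparison[OF ev lim0])
    hence "(\<lambda>M. PP M x) \<longlonglongrightarrow> pi ^ 2 * (x ^ 2 - x + 1/6)"
      by (simp add: LIM_zero_iff)
    thus ?thesis unfolding sums_def PP_def .
  qed
qed


declare bernoulli_num.simps[simp del]

lemma bernoulli_num_rec:
  assumes "n \<ge> 1"
  shows "(\<Sum>j<Suc n. real (Suc n choose j) * bernoulli_num j) = 0"
proof -
  have "bernoulli_num n = - (\<Sum>j<n. real (Suc n choose j) * bernoulli_num j) / real (Suc n)"
    using assms by (subst bernoulli_num.simps) simp
  hence "(\<Sum>j<n. real (Suc n choose j) * bernoulli_num j) = - real (Suc n) * bernoulli_num n"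
    by (simp add: field_simps)
  moreover have "(\<Sum>j<Suc n. real (Suc n choose j) * bernoulli_num j)
      = (\<Sum>j<n. real (Suc n choose j) * bernoulli_num j) + real (Suc n) * bernoulli_num n"
    by simp
  ultimately show ?thesis by (simp add: algebra_simps)
qed

lemma bernoulli_poly_0: "bernoulli_poly n 0 = bernoulli_num n"
proof -
  have "bernoulli_poly n 0 = (\<Sum>j\<le>n. if j = n then bernoulli_num n else 0)"
    unfolding bernoulli_poly_def by (intro sum.cong) auto
  thus ?thesis by simp
qed

lemma bernoulli_poly_1:
  assumes "n \<ge> 2"
  shows "bernoulli_poly n 1 = bernoulli_num n"
proof -
  obtain m where m: "n = Suc m" "m \<ge> 1" using assms by (cases n) auto
  have "bernoulli_poly n 1 = (\<Sum>j<Suc n. real (n choose j) * bernoulli_num j)"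
    unfolding bernoulli_poly_def lessThan_Suc_atMost by simp
  also have "\<dots> = (\<Sum>j<n. real (n choose j) * bernoulli_num j) + bernoulli_num n" by simp
  also have "(\<Sum>j<n. real (n choose j) * bernoulli_num j) = 0"
    using bernoulli_num_rec[OF m(2)] m(1) by simp
  finally show ?thesis by simp
qed

lemma bernoulli_poly_deriv:
  "(bernoulli_poly (Suc n) has_real_derivative (real (Suc n) * bernoulli_poly n x)) (at x)"
proof -
  have d: "((\<lambda>x. bernoulli_poly (Suc n) x) has_real_derivative
      (\<Sum>j\<le>Suc n. real (Suc n choose j) * bernoulli_num j * (real (Suc n - j) * x ^ (Suc n - j - 1)))) (at x)"
    unfolding bernoulli_poly_def
    by (rule DERIV_sum) (auto intro!: derivative_eq_intros)
  have "(\<Sum>j\<le>Suc n. real (Suc n choose j) * bernoulli_num j * (real (Suc n - j) * x ^ (Suc n - j - 1)))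
      = (\<Sum>j\<le>n. real (Suc n choose j) * bernoulli_num j * (real (Suc n - j) * x ^ (Suc n - j - 1)))"
    by simp
  also have "\<dots> = (\<Sum>j\<le>n. real (Suc n) * (real (n choose j) * bernoulli_num j * x ^ (n - j)))"
  proof (intro sum.cong refl)
    fix j assume j: "j \<in> {..n}"
    have "(Suc n - j) * (Suc n choose j) = Suc n * (n choose j)"
      using binomial_absorb_comp[of "Suc n" j] by simp
    hence h: "real (Suc n - j) * real (Suc n choose j) = real (Suc n) * real (n choose j)"
      by (metis of_nat_mult)
    have "real (Suc n choose j) * bernoulli_num j * (real (Suc n - j) * x ^ (Suc n - j - 1))
        = (real (Suc n - j) * real (Suc n choose j)) * (bernoulli_num j * x ^ (n - j))"
      by (simp add: ac_simps)
    also have "\<dots> = (real (Suc n) * real (n choose j)) * (bernoulli_num j * x ^ (n - j))"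
      by (simp only: h)
    finally show "real (Suc n choose j) * bernoulli_num j * (real (Suc n - j) * x ^ (Suc n - j - 1))
        = real (Suc n) * (real (n choose j) * bernoulli_num j * x ^ (n - j))"
      by (simp add: ac_simps)
  qed
  also have "\<dots> = real (Suc n) * bernoulli_poly n x"
    unfolding bernoulli_poly_def by (simp add: sum_distrib_left)
  finally show ?thesis using d by simp
qed

definition fs :: "nat \<Rightarrow> real \<Rightarrow> real" where
  "fs n x = (\<Sum>m. cos (2 * pi * real (Suc m) * x - real n * pi / 2) / real (Suc m) ^ n)"

definition fb :: "nat \<Rightarrow> real \<Rightarrow> real" where
  "fb n x = - (2 * fact n / (2 * pi) ^ n) * fs n x"

lemma summable_inv_pow: "n \<ge> 2 \<Longrightarrow> summable (\<lambda>m. 1 / real (Suc m) ^ n)"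
  using inverse_power_summable[of n, where 'a=real] summable_Suc_iff[of "\<lambda>m. inverse (real m ^ n)"]
  by (simp add: inverse_eq_divide)

lemma zeta_nat_sums: "n \<ge> 2 \<Longrightarrow> (\<lambda>m. 1 / real (Suc m) ^ n) sums zeta_nat n"
  unfolding zeta_nat_def using summable_inv_pow by (simp add: summable_sums)

lemma fs_term_bound: "norm (cos (2 * pi * real (Suc m) * x - real n * pi / 2) / real (Suc m) ^ n) \<le> 1 / real (Suc m) ^ n"
  by (auto simp: abs_divide intro!: divide_right_mono)

lemma fs_summable: "n \<ge> 2 \<Longrightarrow> summable (\<lambda>m. cos (2 * pi * real (Suc m) * x - real n * pi / 2) / real (Suc m) ^ n)"
  by (rule summable_comparison_test[OF _ summable_inv_pow]) (use fs_term_bound in blast)+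

lemma fs_bound: "n \<ge> 2 \<Longrightarrow> \<bar>fs n x\<bar> \<le> zeta_nat n"
proof -
  assume n: "n \<ge> 2"
  have sa: "summable (\<lambda>m. \<bar>cos (2 * pi * real (Suc m) * x - real n * pi / 2) / real (Suc m) ^ n\<bar>)"
    by (rule summable_comparison_test'[OF summable_inv_pow[OF n]]) (use fs_term_bound in auto)
  have "\<bar>fs n x\<bar> \<le> (\<Sum>m. \<bar>cos (2 * pi * real (Suc m) * x - real n * pi / 2) / real (Suc m) ^ n\<bar>)"
    unfolding fs_def by (rule summable_rabs[OF sa])
  also have "\<dots> \<le> (\<Sum>m. 1 / real (Suc m) ^ n)"
    by (intro suminf_le sa summable_inv_pow[OF n]) (auto simp: abs_divide intro!: divide_right_mono)
  finally show ?thesis unfolding zeta_nat_def .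
qed

lemma fb_bound: "n \<ge> 2 \<Longrightarrow> \<bar>fb n x\<bar> \<le> 2 * fact n / (2 * pi) ^ n * zeta_nat n"
  unfolding fb_def using fs_bound[of n x]
  by (auto simp: abs_mult intro!: mult_left_mono divide_right_mono)

lemma aux_frac: "r \<noteq> 0 \<Longrightarrow> R \<noteq> 0 \<Longrightarrow> (- S * (2 * pi * r)) / (r * R) = 2 * pi * (- S / R)"
  for r R S :: real by (simp add: field_simps)

lemma fs_deriv:
  assumes "n \<ge> 3"
  shows "(fs n has_real_derivative (2 * pi * fs (n - 1) x)) (at x)"
proof -
  define f where "f m t = cos (2 * pi * real (Suc m) * t - real n * pi / 2) / real (Suc m) ^ n" for m t
  define f' where "f' m t = 2 * pi * (cos (2 * pi * real (Suc m) * t - real (n - 1) * pi / 2) / real (Suc m) ^ (n - 1))" for m t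
  have df: "(f m has_real_derivative f' m t) (at t within UNIV)" for m t
  proof -
    have "(f m has_real_derivative (- sin (2 * pi * real (Suc m) * t - real n * pi / 2) * (2 * pi * real (Suc m))) / real (Suc m) ^ n) (at t)"
      unfolding f_def by (auto intro!: derivative_eq_intros)
    moreover have "(- sin (2 * pi * real (Suc m) * t - real n * pi / 2) * (2 * pi * real (Suc m))) / real (Suc m) ^ n = f' m t"
    proof -
      have e: "2 * pi * real (Suc m) * t - real (n - 1) * pi / 2 = (2 * pi * real (Suc m) * t - real n * pi / 2) + pi / 2"
        using assms by (simp add: of_nat_diff field_simps)
      have p: "real (Suc m) ^ n = real (Suc m) * real (Suc m) ^ (n - 1)"
      proof -
        have nn: "Suc (n - 1) = n" using assms by simp
        show ?thesis using power_Suc[of "real (Suc m)" "n - 1"] by (simp only: nn)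
      qed
      have cs: "cos ((2 * pi * real (Suc m) * t - real n * pi / 2) + pi / 2) = - sin (2 * pi * real (Suc m) * t - real n * pi / 2)"
        by (simp add: cos_add)
      show ?thesis unfolding f'_def e cs p
        by (rule aux_frac) simp_all
    qed
    ultimately show ?thesis by simp
  qed
  have uc: "uniformly_convergent_on UNIV (\<lambda>N t. \<Sum>i<N. f' i t)"
  proof (rule Weierstrass_m_test')
    show "norm (f' m t) \<le> 2 * pi * (1 / real (Suc m) ^ (n - 1))" for m t
    proof -
      have "norm (f' m t) = norm (2 * pi) * norm (cos (2 * pi * real (Suc m) * t - real (n - 1) * pi / 2) / real (Suc m) ^ (n - 1))"
        unfolding f'_def by (rule norm_mult)
      also have "\<dots> \<le> norm (2 * pi) * (1 / real (Suc m) ^ (n - 1))"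
        by (rule mult_left_mono[OF fs_term_bound]) simp
      finally show ?thesis by simp
    qed
    show "summable (\<lambda>m. 2 * pi * (1 / real (Suc m) ^ (n - 1)))"
      using assms by (intro summable_mult summable_inv_pow) auto
  qed
  have "((\<lambda>t. \<Sum>m. f m t) has_real_derivative (\<Sum>m. f' m x)) (at x)"
  proof -
    have s0: "summable (\<lambda>m. f m 0)" unfolding f_def by (rule fs_summable) (use assms in auto)
    show ?thesis by (rule has_field_derivative_series'(2)[OF convex_UNIV df uc UNIV_I s0]) simp
  qed
  moreover have "(\<Sum>m. f' m x) = 2 * pi * fs (n - 1) x"
    unfolding f'_def fs_def using assms by (intro suminf_mult fs_summable) auto
  moreover have "(\<lambda>t. \<Sum>m. f m t) = fs n" unfolding f_def fs_def by auto
  ultimately show ?thesis by simp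
qed

lemma fb_deriv:
  assumes "n \<ge> 3"
  shows "(fb n has_real_derivative (real n * fb (n - 1) x)) (at x)"
proof -
  have "(fb n has_real_derivative (- (2 * fact n / (2 * pi) ^ n) * (2 * pi * fs (n - 1) x))) (at x)"
    unfolding fb_def[abs_def] by (intro DERIV_cmult fs_deriv assms)
  moreover have "- (2 * fact n / (2 * pi) ^ n) * (2 * pi * fs (n - 1) x) = real n * fb (n - 1) x"
  proof -
    obtain k where k: "n = Suc k" using assms by (cases n) auto
    show ?thesis unfolding fb_def k by (simp add: field_simps)
  qed
  ultimately show ?thesis by simp
qed

lemma fs_1: "fs n 1 = fs n 0"
proof -
  have "cos (2 * pi * real (Suc m) * 1 - real n * pi / 2) = cos (2 * pi * real (Suc m) * 0 - real n * pi / 2)" for m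
  proof -
    have "2 * pi * real (Suc m) = real (2 * Suc m) * pi" by simp
    hence s: "sin (2 * pi * (1 + real m)) = 0" "cos (2 * pi * (1 + real m)) = 1"
      by (simp_all only: sin_npi cos_npi of_nat_Suc add.commute) simp
    show ?thesis by (simp add: cos_diff s)
  qed
  thus ?thesis unfolding fs_def by simp
qed

lemma bernoulli_num_012: "bernoulli_num 0 = 1" "bernoulli_num (Suc 0) = -1/2" "bernoulli_num (Suc (Suc 0)) = 1/6"
proof -
  show b0: "bernoulli_num 0 = 1" by (subst bernoulli_num.simps) simp
  show b1: "bernoulli_num (Suc 0) = -1/2" by (subst bernoulli_num.simps) (simp add: b0)
  show "bernoulli_num (Suc (Suc 0)) = 1/6"
    by (subst bernoulli_num.simps) (simp add: b0 b1 eval_nat_numeral)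
qed

lemma bernoulli_poly_2: "bernoulli_poly 2 x = x ^ 2 - x + 1/6"
  unfolding bernoulli_poly_def by (simp add: bernoulli_num_012 eval_nat_numeral)

lemma base_case: "x \<in> {0..1} \<Longrightarrow> bernoulli_poly 2 x = fb 2 x"
proof -
  assume x: "x \<in> {0..1}"
  have c: "cos (2 * pi * real (Suc m) * x - real (2::nat) * pi / 2) / real (Suc m) ^ 2
     = - (cos (2 * pi * real (Suc m) * x) / real (Suc m) ^ 2)" for m
  proof -
    have "real (2::nat) * pi / 2 = pi" by simp
    hence "cos (2 * pi * real (Suc m) * x - real (2::nat) * pi / 2) = - cos (2 * pi * real (Suc m) * x)"
      by (simp only: cos_diff cos_pi sin_pi)
    thus ?thesis by simp
  qed
  have "(\<lambda>m. - (cos (2 * pi * real (Suc m) * x) / real (Suc m) ^ 2)) sums (- (pi ^ 2 * (x ^ 2 - x + 1/6)))"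
    using x by (intro sums_minus cos_series_2) auto
  hence s: "(\<lambda>m. cos (2 * pi * real (Suc m) * x - real (2::nat) * pi / 2) / real (Suc m) ^ 2) sums (- (pi ^ 2 * (x ^ 2 - x + 1/6)))"
    by (simp only: c)
  have "fs 2 x = - (pi ^ 2 * (x ^ 2 - x + 1/6))"
    unfolding fs_def using s by (rule sums_unique[symmetric])
  moreover have "fact 2 = (2::real)" by (simp add: eval_nat_numeral)
  moreover have "(2 * pi) ^ 2 = 4 * pi ^ 2" by (simp add: power2_eq_square)
  ultimately have "fb 2 x = (4 / (4 * pi ^ 2)) * (pi ^ 2 * (x ^ 2 - x + 1/6))"
    unfolding fb_def by simp
  also have "\<dots> = x ^ 2 - x + 1/6" by simp
  finally show ?thesis unfolding bernoulli_poly_2 by simp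
qed

lemma fourier_bernoulli:
  assumes "n \<ge> 2" "x \<in> {0..1}"
  shows "bernoulli_poly n x = fb n x"
  using assms
proof (induction n arbitrary: x rule: dec_induct)
  case base thus ?case by (rule base_case)
next
  case (step n)
  define D where "D t = fb (Suc n) t - bernoulli_poly (Suc n) t" for t
  define G where "G t = fb (Suc (Suc n)) t - bernoulli_poly (Suc (Suc n)) t" for t
  have dD: "(D has_real_derivative real (Suc n) * (fb n t - bernoulli_poly n t)) (at t)" for t
    unfolding D_def[abs_def] using step.hyps fb_deriv[of "Suc n" t] bernoulli_poly_deriv[of n t]
    by (auto intro!: derivative_eq_intros simp: algebra_simps)
  have dG: "(G has_real_derivative real (Suc (Suc n)) * D t) (at t)" for t
    unfolding G_def[abs_def] D_def using step.hyps fb_deriv[of "Suc (Suc n)" t] bernoulli_poly_deriv[of "Suc n" t]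
    by (auto intro!: derivative_eq_intros simp: algebra_simps)
  have Dc: "D t = D 0" if "t \<in> {0..1}" for t
  proof (cases "t = 0")
    case False
    with that have t: "0 < t" by auto
    from MVT2[OF t, of D "\<lambda>t. real (Suc n) * (fb n t - bernoulli_poly n t)"] dD
    obtain z where z: "0 < z" "z < t" "D t - D 0 = (t - 0) * (real (Suc n) * (fb n z - bernoulli_poly n z))"
      by blast
    have "fb n z = bernoulli_poly n z" using z that step.IH[of z] by auto
    with z show ?thesis by simp
  qed simp
  from MVT2[of 0 1 G "\<lambda>t. real (Suc (Suc n)) * D t"] dG
  obtain z where z: "0 < z" "z < 1" "G 1 - G 0 = (1 - 0) * (real (Suc (Suc n)) * D z)"
    by force
  have "G 1 = G 0"
    unfolding G_def fb_def using fs_1 bernoulli_poly_1[of "Suc (Suc n)"] bernoulli_poly_0 step.hyps by simp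
  with z have "D z = 0" by simp
  with Dc[of z] z have "D 0 = 0" by simp
  with Dc[of x] step.prems show ?case unfolding D_def by simp
qed


lemma cot_plus_pi: "cot (y + pi) = cot (y::real)"
  by (simp add: cot_def sin_add cos_add)

lemma deriv_periodic:
  fixes f :: "real \<Rightarrow> real"
  assumes "\<And>y. f (y + c) = f y"
  shows "deriv f (y + c) = deriv f y"
proof -
  have "(\<lambda>x. f (x + c)) = f" using assms by auto
  hence "\<And>D. (f has_field_derivative D) (at (y + c)) = (f has_field_derivative D) (at y)"
    using DERIV_shift[of f _ y c] by simp
  thus ?thesis unfolding deriv_def by simp
qed

lemma iter_deriv_cot_periodic: "(deriv ^^ m) cot (y + pi) = (deriv ^^ m) cot y"
proof (induction m arbitrary: y)
  case 0 thus ?case by (simp add: cot_plus_pi)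
next
  case (Suc m)
  show ?case using deriv_periodic[of "(deriv ^^ m) cot" pi y] Suc by simp
qed

lemma iter_deriv_cot_periodic_nat: "(deriv ^^ m) cot (y + real q * pi) = (deriv ^^ m) cot y"
proof (induction q)
  case 0 thus ?case by simp
next
  case (Suc q)
  have e: "y + real (Suc q) * pi = (y + real q * pi) + pi" by (simp add: algebra_simps)
  show ?case by (simp only: e iter_deriv_cot_periodic Suc)
qed

lemma Gamma_reflection_real:
  fixes x :: real
  shows "Gamma x * Gamma (1 - x) = pi / sin (pi * x)"
proof -
  have "complex_of_real (Gamma x * Gamma (1 - x)) = complex_of_real (pi / sin (pi * x))"
    using Gamma_reflection_complex[of "complex_of_real x"]
    by (simp add: Gamma_complex_of_real[symmetric] sin_of_real[symmetric])
  thus ?thesis by (simp only: of_real_eq_iff)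
qed

lemma real_not_nonpos_Int: "(x::real) > 0 \<Longrightarrow> x \<notin> \<int>\<^sub>\<le>\<^sub>0"
  by (auto elim!: nonpos_Ints_cases)

lemma aux_cancel:
  fixes D c s :: real
  assumes "pi / s * D = - (pi * (c * pi)) / s^2" "s > 0"
  shows "D = - pi * c / s"
proof -
  have "D = (s / pi) * (pi / s * D)" using assms(2) by simp
  also have "\<dots> = (s / pi) * (- (pi * (c * pi)) / s^2)" using assms(1) by simp
  also have "\<dots> = - pi * c / s" using assms(2) by (simp add: power2_eq_square field_simps)
  finally show ?thesis .
qed

lemma cot_Digamma:
  fixes x :: real
  assumes "0 < x" "x < 1"
  shows "pi * cot (pi * x) = Digamma (1 - x) - Digamma x"
proof -
  have s: "sin (pi * x) > 0" using assms by (intro sin_gt_zero) auto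
  define F where "F t = Gamma t * Gamma (1 - t)" for t :: real
  define G where "G t = pi / sin (pi * t)" for t :: real
  have FG: "F t = G t" for t unfolding F_def G_def by (rule Gamma_reflection_real)
  have x1: "x \<notin> \<int>\<^sub>\<le>\<^sub>0" "1 - x \<notin> \<int>\<^sub>\<le>\<^sub>0" using assms by (auto intro!: real_not_nonpos_Int)
  have dF: "(F has_field_derivative
      (Gamma x * Digamma x * Gamma (1 - x) + Gamma x * (Gamma (1 - x) * Digamma (1 - x) * (-1)))) (at x)"
    unfolding F_def using x1
    by (auto intro!: derivative_eq_intros has_field_derivative_Gamma)
  have dG: "(G has_field_derivative (- (pi * (cos (pi * x) * pi)) / (sin (pi * x))^2)) (at x)"
    unfolding G_def using s
    by (auto intro!: derivative_eq_intros simp: power2_eq_square)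
  have "F = G" using FG by auto
  with dF dG have eq: "Gamma x * Digamma x * Gamma (1 - x) + Gamma x * (Gamma (1 - x) * Digamma (1 - x) * (-1))
     = - (pi * (cos (pi * x) * pi)) / (sin (pi * x))^2"
    using DERIV_unique by blast
  have "Gamma x * Gamma (1 - x) * (Digamma x - Digamma (1 - x)) = - (pi * (cos (pi * x) * pi)) / (sin (pi * x))^2"
    using eq by (simp add: algebra_simps)
  hence "pi / sin (pi * x) * (Digamma x - Digamma (1 - x)) = - (pi * (cos (pi * x) * pi)) / (sin (pi * x))^2"
    using FG[of x] unfolding F_def G_def by simp
  hence "Digamma x - Digamma (1 - x) = - pi * cos (pi * x) / sin (pi * x)"
    using s by (rule aux_cancel)
  thus ?thesis by (simp add: cot_def)
qed

definition Hc :: "nat \<Rightarrow> real \<Rightarrow> real" where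
  "Hc m y = (1 / pi ^ (m + 1)) * ((-1) ^ m * Polygamma m (1 - y / pi) - Polygamma m (y / pi))"

lemma Hc_deriv:
  assumes "0 < y" "y < pi"
  shows "(Hc m has_field_derivative Hc (Suc m) y) (at y)"
proof -
  have a: "y / pi > 0" "1 - y / pi > 0" using assms by (auto simp: field_simps)
  have "(Hc m has_field_derivative
     (1 / pi ^ (m + 1)) * ((-1) ^ m * (Polygamma (Suc m) (1 - y / pi) * (- (1 / pi))) - Polygamma (Suc m) (y / pi) * (1 / pi))) (at y)"
    unfolding Hc_def using a
    by (auto intro!: derivative_eq_intros real_not_nonpos_Int)
  moreover have "(1 / pi ^ (m + 1)) * ((-1) ^ m * (Polygamma (Suc m) (1 - y / pi) * (- (1 / pi))) - Polygamma (Suc m) (y / pi) * (1 / pi)) = Hc (Suc m) y"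
    unfolding Hc_def by (simp add: field_simps)
  ultimately show ?thesis by simp
qed

lemma iter_deriv_cot_Hc:
  assumes "0 < y" "y < pi"
  shows "(deriv ^^ m) cot y = Hc m y"
  using assms
proof (induction m arbitrary: y)
  case 0
  have "pi * cot (pi * (y / pi)) = Digamma (1 - y / pi) - Digamma (y / pi)"
    using 0 by (intro cot_Digamma) (auto simp: field_simps)
  thus ?case unfolding Hc_def by (simp add: field_simps)
next
  case (Suc m)
  have ev': "eventually (\<lambda>t. t \<in> {0<..<pi}) (nhds y)"
    using Suc.prems by (intro eventually_nhds_in_open) auto
  have "eventually (\<lambda>t. (deriv ^^ m) cot t = Hc m t) (nhds y)"
    using ev' by eventually_elim (use Suc.IH in auto)
  hence "deriv ((deriv ^^ m) cot) y = deriv (Hc m) y"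
    by (intro deriv_cong_ev) auto
  also have "\<dots> = Hc (Suc m) y" using Hc_deriv[OF Suc.prems] by (rule DERIV_imp_deriv)
  finally show ?case by simp
qed


declare bernoulli_num.simps[simp del]


definition Sz :: "nat \<Rightarrow> real \<Rightarrow> real" where
  "Sz p z = (\<Sum>j. inverse ((z + real j) ^ p))"

lemma Sz_summable: "z > 0 \<Longrightarrow> p \<ge> 2 \<Longrightarrow> summable (\<lambda>j. inverse ((z + real j) ^ p))"
  using Polygamma_converges'[of z p] by simp

lemma Sz_nonneg: "z > 0 \<Longrightarrow> p \<ge> 2 \<Longrightarrow> Sz p z \<ge> 0"
  unfolding Sz_def by (intro suminf_nonneg Sz_summable) auto

lemma Polygamma_abs:
  assumes "m \<ge> 1" "z > 0"
  shows "\<bar>Polygamma m z\<bar> = fact m * Sz (Suc m) z"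
proof -
  have "Polygamma m z = (-1) ^ Suc m * fact m * Sz (Suc m) z"
    using assms unfolding Polygamma_def Sz_def by simp
  moreover have "Sz (Suc m) z \<ge> 0" using assms by (intro Sz_nonneg) auto
  ultimately show ?thesis by (simp add: abs_mult)
qed

lemma cot_deriv_bound:
  assumes "m \<ge> 1" "0 < y" "y < pi"
  shows "\<bar>(deriv ^^ m) cot y\<bar> \<le> fact m / pi ^ (m + 1) * (Sz (Suc m) (1 - y / pi) + Sz (Suc m) (y / pi))"
proof -
  have a: "y / pi > 0" "1 - y / pi > 0" using assms by (auto simp: field_simps)
  have "\<bar>(deriv ^^ m) cot y\<bar> = \<bar>Hc m y\<bar>" using iter_deriv_cot_Hc[OF assms(2,3)] by simp
  also have "\<dots> = (1 / pi ^ (m + 1)) * \<bar>(-1) ^ m * Polygamma m (1 - y / pi) - Polygamma m (y / pi)\<bar>"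
    unfolding Hc_def by (simp add: abs_mult)
  also have "\<bar>(-1) ^ m * Polygamma m (1 - y / pi) - Polygamma m (y / pi)\<bar> \<le> \<bar>Polygamma m (1 - y / pi)\<bar> + \<bar>Polygamma m (y / pi)\<bar>"
    by (rule order_trans[OF abs_triangle_ineq4]) (simp add: abs_mult)
  hence "(1 / pi ^ (m + 1)) * \<bar>(-1) ^ m * Polygamma m (1 - y / pi) - Polygamma m (y / pi)\<bar>
       \<le> (1 / pi ^ (m + 1)) * (\<bar>Polygamma m (1 - y / pi)\<bar> + \<bar>Polygamma m (y / pi)\<bar>)"
    by (intro mult_left_mono) auto
  also have "\<dots> = fact m / pi ^ (m + 1) * (Sz (Suc m) (1 - y / pi) + Sz (Suc m) (y / pi))"
    using Polygamma_abs[OF assms(1) a(1)] Polygamma_abs[OF assms(1) a(2)] by (simp add: field_simps)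
  finally show ?thesis .
qed

definition Tk :: "nat \<Rightarrow> nat \<Rightarrow> nat \<Rightarrow> real" where
  "Tk k p r = (\<Sum>j. inverse (real (r + j * k) ^ p))"

lemma Sz_Tk:
  assumes "k \<ge> 1" "r \<ge> 1" "p \<ge> 2"
  shows "Sz p (real r / real k) = real k ^ p * Tk k p r"
    and "summable (\<lambda>j. inverse (real (r + j * k) ^ p))"
proof -
  have kp: "real k > 0" using assms by simp
  have eq: "inverse (real (r + j * k) ^ p) = inverse (real k ^ p) * inverse ((real r / real k + real j) ^ p)" for j
  proof -
    have "real r / real k + real j = real (r + j * k) / real k" using kp by (simp add: field_simps)
    thus ?thesis using kp by (simp add: power_divide field_simps)
  qed
  have sz: "summable (\<lambda>j. inverse ((real r / real k + real j) ^ p))"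
    using assms kp by (intro Sz_summable) auto
  show sm: "summable (\<lambda>j. inverse (real (r + j * k) ^ p))"
    unfolding eq by (intro summable_mult sz)
  have "Tk k p r = inverse (real k ^ p) * Sz p (real r / real k)"
    unfolding Tk_def Sz_def eq by (intro suminf_mult sz)
  thus "Sz p (real r / real k) = real k ^ p * Tk k p r" using kp by simp
qed

lemma Tk_sum:
  assumes "k \<ge> 1" "p \<ge> 2"
  shows "(\<Sum>i<k. Tk k p (Suc i)) = zeta_nat p"
proof -
  have "(\<lambda>j. \<Sum>n\<in>{j * k..<j * k + k}. 1 / real (Suc n) ^ p) sums zeta_nat p"
    using assms by (intro sums_group zeta_nat_sums) auto
  moreover have "(\<Sum>n\<in>{j * k..<j * k + k}. 1 / real (Suc n) ^ p) = (\<Sum>i<k. inverse (real (Suc i + j * k) ^ p))" for j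
  proof -
    have "(\<Sum>n\<in>{0 + j * k..<k + j * k}. 1 / real (Suc n) ^ p) = (\<Sum>i=0..<k. 1 / real (Suc (i + j * k)) ^ p)"
      by (rule sum.shift_bounds_nat_ivl)
    thus ?thesis by (simp add: add.commute atLeast0LessThan inverse_eq_divide)
  qed
  ultimately have "(\<lambda>j. \<Sum>i<k. inverse (real (Suc i + j * k) ^ p)) sums zeta_nat p" by simp
  hence "zeta_nat p = (\<Sum>j. \<Sum>i<k. inverse (real (Suc i + j * k) ^ p))" by (simp add: sums_iff)
  also have "\<dots> = (\<Sum>i<k. \<Sum>j. inverse (real (Suc i + j * k) ^ p))"
    using assms by (intro suminf_sum Sz_Tk(2)) auto
  finally show ?thesis unfolding Tk_def by simp
qed

lemma Tk_k:
  assumes "k \<ge> 1" "p \<ge> 2"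
  shows "Tk k p k = zeta_nat p / real k ^ p"
proof -
  have "inverse (real (k + j * k) ^ p) = inverse (real k ^ p) * (1 / real (Suc j) ^ p)" for j
  proof -
    have h: "real (k + j * k) = real k * real (Suc j)" by (simp add: algebra_simps)
    have "real (k + j * k) ^ p = real k ^ p * real (Suc j) ^ p" by (simp only: h power_mult_distrib)
    thus ?thesis by (simp add: inverse_mult_distrib divide_inverse)
  qed
  hence "Tk k p k = (\<Sum>j. inverse (real k ^ p) * (1 / real (Suc j) ^ p))" unfolding Tk_def by simp
  also have "\<dots> = inverse (real k ^ p) * zeta_nat p"
    unfolding zeta_nat_def using assms by (intro suminf_mult summable_inv_pow) auto
  finally show ?thesis by (simp add: field_simps)
qed

lemma Tk_sum_lt:
  assumes "k \<ge> 1" "p \<ge> 2"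
  shows "(\<Sum>r=1..k-1. Tk k p r) = zeta_nat p - zeta_nat p / real k ^ p"
proof -
  have "(\<Sum>r=1..k. Tk k p r) = zeta_nat p"
    using Tk_sum[OF assms] by (simp add: sum.atLeast1_atMost_eq[symmetric])
  moreover have "(\<Sum>r=1..k. Tk k p r) = (\<Sum>r=1..k-1. Tk k p r) + Tk k p k"
  proof -
    have "{1..k} = insert k {1..k-1}" using assms by auto
    moreover have "k \<notin> {1..k-1}" using assms by auto
    ultimately show ?thesis by (simp add: add.commute)
  qed
  ultimately show ?thesis using Tk_k[OF assms] by simp
qed

lemma mult_mod_bij:
  fixes h k :: nat
  assumes "k \<ge> 1" "gcd h k = 1"
  shows "(\<lambda>d. d * h mod k) ` {1..k-1} = {1..k-1}" "inj_on (\<lambda>d. d * h mod k) {1..k-1}"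
proof -
  have cop: "coprime k h" using assms(2) by (simp add: coprime_iff_gcd_eq_1 gcd.commute)
  show inj: "inj_on (\<lambda>d. d * h mod k) {1..k-1}"
  proof (rule inj_onI)
    fix a b assume a: "a \<in> {1..k-1}" and b: "b \<in> {1..k-1}" and e: "a * h mod k = b * h mod k"
    have "k dvd (a - b) * h" if "b \<le> a" "a * h mod k = b * h mod k" for a b :: nat
      using that mod_eq_dvd_iff_nat[of "b * h" "a * h" k] by (simp add: diff_mult_distrib)
    hence "k dvd (a - b)" if "b \<le> a" "a * h mod k = b * h mod k" for a b :: nat
      using that cop by (meson coprime_dvd_mult_left_iff)
    moreover have "a - b < k" "b - a < k" using a b by auto
    ultimately show "a = b" using e
      by (metis (no_types, lifting) diff_is_0_eq' dvd_imp_le le_antisym linorder_le_cases not_le zero_less_diff)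
  qed
  have "(\<lambda>d. d * h mod k) ` {1..k-1} \<subseteq> {1..k-1}"
  proof
    fix y assume "y \<in> (\<lambda>d. d * h mod k) ` {1..k-1}"
    then obtain d where d: "d \<in> {1..k-1}" "y = d * h mod k" by auto
    have "y < k" using d assms by simp
    moreover have "y \<noteq> 0"
    proof
      assume "y = 0"
      hence "k dvd d * h" using d by auto
      hence "k dvd d" using cop by (meson coprime_dvd_mult_left_iff)
      with d show False by (auto dest: dvd_imp_le)
    qed
    ultimately show "y \<in> {1..k-1}" by auto
  qed
  thus "(\<lambda>d. d * h mod k) ` {1..k-1} = {1..k-1}" by (intro endo_inj_surj inj) auto
qed

lemma cot_deriv_reduce:
  fixes d h k :: nat
  assumes "k \<ge> 1"
  shows "cot_deriv m (pi * real d * real h / real k) = (deriv ^^ m) cot (pi * real (d * h mod k) / real k)"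
proof -
  have "real (d * h) = real (d * h div k) * real k + real (d * h mod k)"
    by (metis div_mult_mod_eq of_nat_add of_nat_mult)
  hence "pi * real d * real h / real k = pi * real (d * h mod k) / real k + real (d * h div k) * pi"
    using assms by (simp add: field_simps)
  thus ?thesis unfolding cot_deriv_def by (simp only: iter_deriv_cot_periodic_nat)
qed

lemma final_alg_abs:
  fixes a b F F1 d P q1 q2 Z Z2 :: real
  assumes "F \<noteq> 0" "P \<noteq> 0" "d \<noteq> 0" "q1 \<noteq> 0" "q2 \<noteq> 0"
  shows "a / (F * P * d) * ((2 * (d * F1) / q1 * Z2) * (2 * F / q2) * Z * b) = 4 * (a * b) * F1 / (P * (q1 * q2)) * Z * Z2"
  using assms by (simp add: field_simps)

lemma final_algebra:
  fixes k p :: nat and Z Z2 :: real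
  assumes "p \<ge> 2" "k \<ge> 1"
  shows "real k ^ (1 + p) / (fact p * real p * real (p + 2)) *
          ((2 * fact (p + 2) / (2 * pi) ^ (p + 2) * Z2) * (2 * fact p / (2 * pi) ^ p) * Z * real k ^ p)
       = 4 * real k ^ (2 * p + 1) * fact (p + 1) / (real p * (2 * pi) ^ (2 * p + 2)) * Z * Z2"
proof -
  have f: "fact (p + 2) = (real p + 2) * (fact (p + 1) :: real)"
    by (simp add: algebra_simps)
  have k: "real k ^ (1 + p) * real k ^ p = real k ^ (2 * p + 1)"
  proof -
    have e: "(1 + p) + p = 2 * p + 1" by simp
    show ?thesis by (subst power_add[symmetric]) (simp only: e)
  qed
  have q: "(2 * pi) ^ (p + 2) * (2 * pi) ^ p = (2 * pi) ^ (2 * p + 2)"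
  proof -
    have e: "(p + 2) + p = 2 * p + 2" by simp
    show ?thesis by (subst power_add[symmetric]) (simp only: e)
  qed
  have rp: "real (p + 2) = real p + 2" by simp
  have "real k ^ (1 + p) / (fact p * real p * real (p + 2)) *
          ((2 * fact (p + 2) / (2 * pi) ^ (p + 2) * Z2) * (2 * fact p / (2 * pi) ^ p) * Z * real k ^ p)
      = 4 * (real k ^ (1 + p) * real k ^ p) * fact (p + 1) / (real p * ((2 * pi) ^ (p + 2) * (2 * pi) ^ p)) * Z * Z2"
    unfolding rp f by (rule final_alg_abs) (use assms in auto)
  thus ?thesis unfolding k q .
qed

theorem mainTheorem8:
  fixes p k h :: nat
  assumes "p \<ge> 2" and "k \<ge> 1" and "h < k" and "gcd h k = 1"
  shows "norm (v_coeff p h k)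
           \<le> 4 * real k ^ (2 * p + 1) * fact (p + 1) / (real p * (2 * pi) ^ (2 * p + 2))
              * zeta_nat p * zeta_nat (p + 2)"
proof -
  note p = assms(1) and k = assms(2)
  define m where "m = p - 1"
  have mp: "p = Suc m" "m \<ge> 1" "m + 1 = p" using p unfolding m_def by auto
  define Z where "Z = zeta_nat p"
  define Z2 where "Z2 = zeta_nat (p + 2)"
  define \<beta> where "\<beta> = 2 * fact (p + 2) / (2 * pi) ^ (p + 2) * Z2"
  define c0 where "c0 = 2 * fact p / (2 * pi) ^ p"
  have Z0: "Z \<ge> 0" unfolding Z_def zeta_nat_def using p
    by (intro suminf_nonneg summable_inv_pow) auto
  have Bb: "\<bar>bernoulli_poly (p + 2) x\<bar> \<le> \<beta>" if "x \<in> {0..1}" for x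
    using fourier_bernoulli[of "p + 2" x] fb_bound[of "p + 2" x] that unfolding \<beta>_def Z2_def by simp
  have b0: "\<beta> \<ge> 0" using Bb[of 0] by simp
  have Bp: "\<bar>bernoulli_num p\<bar> \<le> c0 * Z"
    using fourier_bernoulli[of p 0] fb_bound[of p 0] p bernoulli_poly_0[of p] unfolding c0_def Z_def by simp
  have Bp2: "\<bar>bernoulli_num (p + 2)\<bar> \<le> \<beta>"
    using Bb[of 0] bernoulli_poly_0[of "p + 2"] by simp
  define S where "S = (\<Sum>d = 1..k - 1. bernoulli_poly (p + 2) (real d / real k) *
                            cot_deriv (p - 1) (pi * real d * real h / real k))"
  define cd where "cd r = \<bar>(deriv ^^ m) cot (pi * real r / real k)\<bar>" for r
  have "\<bar>S\<bar> \<le> (\<Sum>d = 1..k - 1. \<bar>bernoulli_poly (p + 2) (real d / real k) *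
                            cot_deriv (p - 1) (pi * real d * real h / real k)\<bar>)"
    unfolding S_def by (rule sum_abs)
  also have "\<dots> \<le> (\<Sum>d = 1..k - 1. \<beta> * cd (d * h mod k))"
  proof (rule sum_mono)
    fix d assume d: "d \<in> {1..k-1}"
    have "\<bar>bernoulli_poly (p + 2) (real d / real k) * cot_deriv (p - 1) (pi * real d * real h / real k)\<bar>
        = \<bar>bernoulli_poly (p + 2) (real d / real k)\<bar> * cd (d * h mod k)"
      unfolding cd_def m_def cot_deriv_reduce[OF k] by (simp add: abs_mult)
    also have "\<dots> \<le> \<beta> * cd (d * h mod k)"
      using d k by (intro mult_right_mono Bb) (auto simp: cd_def field_simps)
    finally show "\<bar>bernoulli_poly (p + 2) (real d / real k) * cot_deriv (p - 1) (pi * real d * real h / real k)\<bar>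
        \<le> \<beta> * cd (d * h mod k)" .
  qed
  also have "\<dots> = \<beta> * (\<Sum>r = 1..k - 1. cd r)"
  proof -
    have "(\<Sum>r = 1..k - 1. cd r) = (\<Sum>r \<in> (\<lambda>d. d * h mod k) ` {1..k-1}. cd r)"
      using mult_mod_bij(1)[OF k assms(4)] by simp
    also have "\<dots> = (\<Sum>d = 1..k - 1. cd (d * h mod k))"
      by (subst sum.reindex[OF mult_mod_bij(2)[OF k assms(4)]]) simp
    finally show ?thesis by (simp add: sum_distrib_left)
  qed
  also have "(\<Sum>r = 1..k - 1. cd r) \<le> (\<Sum>r = 1..k - 1. fact m / pi ^ p * (real k ^ p * Tk k p (k - r) + real k ^ p * Tk k p r))"
  proof (rule sum_mono)
    fix r assume r: "r \<in> {1..k-1}"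
    have y: "0 < pi * real r / real k" "pi * real r / real k < pi" using r k by (auto simp: field_simps)
    have e1: "pi * real r / real k / pi = real r / real k" by simp
    have rk: "r \<le> k" using r by auto
    have e2: "1 - pi * real r / real k / pi = real (k - r) / real k" using rk k by (simp add: field_simps of_nat_diff)
    have "cd r \<le> fact m / pi ^ (m + 1) * (Sz (Suc m) (1 - pi * real r / real k / pi) + Sz (Suc m) (pi * real r / real k / pi))"
      unfolding cd_def by (rule cot_deriv_bound[OF mp(2) y])
    also have "\<dots> = fact m / pi ^ p * (real k ^ p * Tk k p (k - r) + real k ^ p * Tk k p r)"
    proof -
      have t1: "Sz p (real (k - r) / real k) = real k ^ p * Tk k p (k - r)"
        using Sz_Tk(1)[of k "k - r" p] rk r k p by auto
      have t2: "Sz p (real r / real k) = real k ^ p * Tk k p r"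
        using Sz_Tk(1)[of k r p] r k p by auto
      have sm: "Suc m = p" using mp(1) by simp
      have e3: "1 - real r / real k = real (k - r) / real k" using e2 by simp
      show ?thesis unfolding e1 e3 mp(3) sm t1 t2 by simp
    qed
    finally show "cd r \<le> fact m / pi ^ p * (real k ^ p * Tk k p (k - r) + real k ^ p * Tk k p r)" .
  qed
  also have "(\<Sum>r = 1..k - 1. fact m / pi ^ p * (real k ^ p * Tk k p (k - r) + real k ^ p * Tk k p r))
      = fact m / pi ^ p * real k ^ p * ((\<Sum>r = 1..k - 1. Tk k p (k - r)) + (\<Sum>r = 1..k - 1. Tk k p r))"
  proof -
    have "(\<Sum>r = 1..k - 1. fact m / pi ^ p * (real k ^ p * Tk k p (k - r) + real k ^ p * Tk k p r))
        = (\<Sum>r = 1..k - 1. fact m / pi ^ p * real k ^ p * (Tk k p (k - r) + Tk k p r))"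
      by (intro sum.cong refl) (simp only: distrib_left mult.assoc)
    also have "\<dots> = fact m / pi ^ p * real k ^ p * (\<Sum>r = 1..k - 1. Tk k p (k - r) + Tk k p r)"
      by (rule sum_distrib_left[symmetric])
    finally show ?thesis by (simp only: sum.distrib)
  qed
  also have "(\<Sum>r = 1..k - 1. Tk k p (k - r)) = (\<Sum>r = 1..k - 1. Tk k p r)"
  proof -
    have "(\<Sum>r = 1..k - 1. Tk k p r) = (\<Sum>i = 1..k - 1. Tk k p (k - 1 + 1 - i))"
      by (rule sum.atLeastAtMost_rev)
    thus ?thesis using k by simp
  qed
  also have "(\<Sum>r = 1..k - 1. Tk k p r) = Z - Z / real k ^ p"
    unfolding Z_def by (rule Tk_sum_lt[OF k p])
  finally have Sb: "\<bar>S\<bar> \<le> \<beta> * (fact m / pi ^ p * real k ^ p * ((Z - Z / real k ^ p) + (Z - Z / real k ^ p)))"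
    using b0 by (simp add: mult_left_mono)
  have Sb': "real p / 2 ^ p * \<bar>S\<bar> \<le> \<beta> * c0 * (real k ^ p * Z - Z)"
  proof -
    have "real p / 2 ^ p * \<bar>S\<bar> \<le> real p / 2 ^ p * (\<beta> * (fact m / pi ^ p * real k ^ p * ((Z - Z / real k ^ p) + (Z - Z / real k ^ p))))"
      by (rule mult_left_mono[OF Sb]) simp
    also have "\<dots> = \<beta> * c0 * (real k ^ p * Z - Z)"
    proof -
      have fm: "fact p = real p * (fact m :: real)" using mp(1) by simp
      have kp: "real k ^ p \<noteq> 0" using k by simp
      show ?thesis unfolding c0_def fm using kp by (simp add: field_simps power_mult_distrib)
    qed
    finally show ?thesis .
  qed
  define A where "A = (-1) ^ p * real k ^ (1 + p) / (fact p * real p * real (p + 2))"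
  have v: "v_coeff p h k = complex_of_real A * (complex_of_real (bernoulli_num (p + 2) * bernoulli_num p)
      + of_nat p / (2 * \<i>) ^ p * complex_of_real S)"
    unfolding v_coeff_def A_def S_def by simp
  have nA: "norm (complex_of_real A) = real k ^ (1 + p) / (fact p * real p * real (p + 2))"
    by (simp only: norm_of_real) (simp add: A_def abs_mult)
  have n2: "norm (of_nat p / (2 * \<i>) ^ p * complex_of_real S) = real p / 2 ^ p * \<bar>S\<bar>"
    by (simp add: norm_mult norm_divide norm_power)
  have "norm (complex_of_real (bernoulli_num (p + 2) * bernoulli_num p) + of_nat p / (2 * \<i>) ^ p * complex_of_real S)
      \<le> \<bar>bernoulli_num (p + 2) * bernoulli_num p\<bar> + real p / 2 ^ p * \<bar>S\<bar>"
    using norm_triangle_ineq[of "complex_of_real (bernoulli_num (p + 2) * bernoulli_num p)" "of_nat p / (2 * \<i>) ^ p * complex_of_real S"]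
    unfolding n2 norm_of_real .
  also have "\<bar>bernoulli_num (p + 2) * bernoulli_num p\<bar> \<le> \<beta> * (c0 * Z)"
    unfolding abs_mult by (rule mult_mono[OF Bp2 Bp]) (auto simp: b0)
  finally have N: "norm (complex_of_real (bernoulli_num (p + 2) * bernoulli_num p) + of_nat p / (2 * \<i>) ^ p * complex_of_real S)
      \<le> \<beta> * c0 * Z * real k ^ p"
    using Sb' by (simp add: algebra_simps)
  have "norm (v_coeff p h k) \<le> real k ^ (1 + p) / (fact p * real p * real (p + 2)) * (\<beta> * c0 * Z * real k ^ p)"
    unfolding v norm_mult nA by (rule mult_left_mono[OF N]) simp
  also have "\<dots> = 4 * real k ^ (2 * p + 1) * fact (p + 1) / (real p * (2 * pi) ^ (2 * p + 2)) * Z * Z2"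
    unfolding \<beta>_def c0_def by (rule final_algebra[OF p k])
  finally show ?thesis unfolding Z_def Z2_def .
qed


end
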